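(* Let $q\geq 3$ be odd, let $(v,w)$ be a reduced fraction with $v/w\in\Gamma_q.\infty\cap(0,1]$, and let $n\in\mathbb{N}$. The map \[ W_{q,n}\to\mathrm{RF}_{q,n}(v,w),\qquad \begin{bmatrix}a&b\\c&d\end{bmatrix}\mapsto(av+bw,\,cv+dw) \] (using representing matrices of determinant $\pm1$) is well defined, i.e. $(av+bw,cv+dw)$ is the reduced fraction representing $h.(v/w)$. If $v/w\in(0,1)$ it is a bijection; if $v/w=1$ it is surjective and exactly $2:1$ (each element of $\mathrm{RF}_{q,n}(1,1)$ has exactly two preimages).
   Context: Setup. Let $q\geq 3$ be odd and $\lambda=2\cos(\pi/q)$. Elements of $\mathrm{PGL}_2(\mathbb{R})$ are written as matrices (up to nonzero scalar) and act on $\mathbb{R}\cup\{\infty\}$ by $x\mapsto(ax+b)/(cx+d)$, written $g.x$. $\Gamma_q\subset\mathrm{PSL}_2(\mathbb{R})$ is generated by $T=\begin{bmatrix}1&\lambda\\0&1\end{bmatrix}$ and $S=\begin{bmatrix}0&1\\-1&0\end{bmatrix}$. Put $s(x)=\sin(x\pi/q)/\sin(\pi/q)$, $g_k=\begin{bmatrix}s(k)&-s(k+1)\\-s(k-1)&s(k)\end{bmatrix}\in\Gamma_q$ (determinant $1$), $Q=\begin{bmatrix}0&1\\1&0\end{bmatrix}$, $K=\{(q+1)/2,\dots,q-1\}$. The generalized Farey map $F_q\colon[0,1]\to[0,1]$ is $F_q(x)=g_k.x$ on $[g_k^{-1}.0,g_k^{-1}.1]$ and $F_q(x)=Qg_k.x$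 on $[(Qg_k)^{-1}.1,(Qg_k)^{-1}.0]$, $k\in K$. $\Lambda_q=\{g_k^{-1},(Qg_k)^{-1}:k\in K\}$ generates a free semigroup; $W_{q,n}$ is the set of its words of length $n$. A pair $(a,c)\in\mathbb{Z}[\lambda]^2$ is a reduced fraction if some element of $\Gamma_q$ has a determinant-$1$ representing matrix $\begin{bmatrix}a&*\\c&*\end{bmatrix}$; $(a,c)\sim(-a,-c)$ and the class is identified with $a/c$. $\mathrm{RF}_{q,n}(v,w)$ is the set of reduced fractions $(r,s)$ with $r/s\in F_q^{-n}(v/w)$. *)

theory Defs
  imports Complex_Main
begin

section \<open>2x2 real matrices, written (a,b,c,d) for [[a,b],[c,d]]\<close>

type_synonym mat2 = "real \<times> real \<times> real \<times> real"

definition mmul :: "mat2 \<Rightarrow> mat2 \<Rightarrow> mat2" where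
  "mmul M N = (case M of (a,b,c,d) \<Rightarrow> case N of (e,f,g,h) \<Rightarrow>
      (a*e + b*g, a*f + b*h, c*e + d*g, c*f + d*h))"

definition mdet :: "mat2 \<Rightarrow> real" where
  "mdet M = (case M of (a,b,c,d) \<Rightarrow> a*d - b*c)"

definition minv :: "mat2 \<Rightarrow> mat2" where
  "minv M = (case M of (a,b,c,d) \<Rightarrow> (d / mdet M, - b / mdet M, - c / mdet M, a / mdet M))"

definition mid :: mat2 where "mid = (1,0,0,1)"

definition mob :: "mat2 \<Rightarrow> real \<Rightarrow> real" where
  "mob M x = (case M of (a,b,c,d) \<Rightarrow> (a*x + b) / (c*x + d))"

definition wprod :: "mat2 list \<Rightarrow> mat2" where
  "wprod ws = foldr mmul ws mid"

definition lam :: "nat \<Rightarrow> real" where "lam q = 2 * cos (pi / real q)"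

definition Tm :: "nat \<Rightarrow> mat2" where "Tm q = (1, lam q, 0, 1)"
definition Tinvm :: "nat \<Rightarrow> mat2" where "Tinvm q = (1, - lam q, 0, 1)"
definition Sm :: mat2 where "Sm = (0, 1, -1, 0)"
definition Qm :: mat2 where "Qm = (0, 1, 1, 0)"

text \<open>All determinant-1 matrices representing elements of Gamma_q, i.e. the
  preimage of Gamma_q = <T,S> in SL_2(R) (it contains -I = S^2).\<close>
inductive_set GammaMat :: "nat \<Rightarrow> mat2 set" for q :: nat where
  gm_id: "mid \<in> GammaMat q"
| gm_T: "M \<in> GammaMat q \<Longrightarrow> mmul (Tm q) M \<in> GammaMat q"
| gm_Tinv: "M \<in> GammaMat q \<Longrightarrow> mmul (Tinvm q) M \<in> GammaMat q"
| gm_S: "M \<in> GammaMat q \<Longrightarrow> mmul Sm M \<in> GammaMat q"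

inductive_set Zlam :: "nat \<Rightarrow> real set" for q :: nat where
  zl_one: "1 \<in> Zlam q"
| zl_lam: "lam q \<in> Zlam q"
| zl_diff: "x \<in> Zlam q \<Longrightarrow> y \<in> Zlam q \<Longrightarrow> x - y \<in> Zlam q"
| zl_mult: "x \<in> Zlam q \<Longrightarrow> y \<in> Zlam q \<Longrightarrow> x * y \<in> Zlam q"

definition reduced_frac :: "nat \<Rightarrow> real \<Rightarrow> real \<Rightarrow> bool" where
  "reduced_frac q a c \<longleftrightarrow> a \<in> Zlam q \<and> c \<in> Zlam q \<and>
     (\<exists>b d. (a, b, c, d) \<in> GammaMat q)"

definition pmclass :: "real \<Rightarrow> real \<Rightarrow> (real \<times> real) set" where
  "pmclass a c = {(a, c), (- a, - c)}"

definition sq :: "nat \<Rightarrow> real \<Rightarrow> real" where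
  "sq q x = sin (x * pi / real q) / sin (pi / real q)"

definition gk :: "nat \<Rightarrow> nat \<Rightarrow> mat2" where
  "gk q k = (sq q (real k), - sq q (real k + 1), - sq q (real k - 1), sq q (real k))"

definition Kset :: "nat \<Rightarrow> nat set" where
  "Kset q = {(q + 1) div 2 .. q - 1}"

definition Fbranch :: "nat \<Rightarrow> real \<Rightarrow> real \<Rightarrow> bool" where
  "Fbranch q x y \<longleftrightarrow> (\<exists>k\<in>Kset q.
      (x \<in> {mob (minv (gk q k)) 0 .. mob (minv (gk q k)) 1} \<and> y = mob (gk q k) x) \<or>
      (x \<in> {mob (minv (mmul Qm (gk q k))) 1 .. mob (minv (mmul Qm (gk q k))) 0} \<and>
         y = mob (mmul Qm (gk q k)) x))"

definition Fq :: "nat \<Rightarrow> real \<Rightarrow> real" where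
  "Fq q x = (SOME y. Fbranch q x y)"

text \<open>The generators Lambda_q, as representing matrices of determinant +-1.\<close>
definition LamSet :: "nat \<Rightarrow> mat2 set" where
  "LamSet q = {minv (gk q k) | k. k \<in> Kset q} \<union> {minv (mmul Qm (gk q k)) | k. k \<in> Kset q}"

definition Words :: "nat \<Rightarrow> nat \<Rightarrow> mat2 list set" where
  "Words q n = {ws. length ws = n \<and> set ws \<subseteq> LamSet q}"

text \<open>RF_{q,n}(v,w): classes of reduced fractions (r,s) with r/s in F_q^{-n}(v/w).
  Since F_q^{-n}(v/w) \<subseteq> [0,1], r/s is finite, i.e. s \<noteq> 0.\<close>
definition RF :: "nat \<Rightarrow> nat \<Rightarrow> real \<Rightarrow> real \<Rightarrow> (real \<times> real) set set" where
  "RF q n v w = {pmclass r s | r s. reduced_frac q r s \<and> s \<noteq> 0 \<and>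
      r / s \<in> {0..1} \<and> (Fq q ^^ n) (r / s) = v / w}"

definition wmap :: "real \<Rightarrow> real \<Rightarrow> mat2 list \<Rightarrow> (real \<times> real) set" where
  "wmap v w ws = (case wprod ws of (a,b,c,d) \<Rightarrow> pmclass (a*v + b*w) (c*v + d*w))"

end

theory Submission
  imports Defs
begin


definition mneg :: "mat2 \<Rightarrow> mat2" where "mneg M = (case M of (a,b,c,d) \<Rightarrow> (-a,-b,-c,-d))"
definition ap :: "mat2 \<Rightarrow> real \<times> real \<Rightarrow> real \<times> real" where
  "ap M p = (case M of (a,b,c,d) \<Rightarrow> case p of (x,y) \<Rightarrow> (a*x + b*y, c*x + d*y))"
definition adj :: "mat2 \<Rightarrow> mat2" where "adj M = (case M of (a,b,c,d) \<Rightarrow> (d,-b,-c,a))"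

lemma mmul_assoc: "mmul (mmul A B) C = mmul A (mmul B C)"
  by (cases A; cases B; cases C) (simp add: mmul_def algebra_simps)
lemma mmul_mid[simp]: "mmul mid A = A" "mmul A mid = A"
  by (cases A; simp add: mmul_def mid_def)+
lemma mneg_mmul[simp]: "mmul (mneg A) B = mneg (mmul A B)" "mmul A (mneg B) = mneg (mmul A B)"
  by (cases A; cases B; simp add: mmul_def mneg_def)+
lemma mneg_mneg[simp]: "mneg (mneg A) = A" by (cases A) (simp add: mneg_def)
lemma ap_mmul: "ap (mmul A B) p = ap A (ap B p)"
  by (cases A; cases B; cases p) (simp add: mmul_def ap_def algebra_simps)
lemma ap_mneg: "ap (mneg A) p = (- fst (ap A p), - snd (ap A p))"
  by (cases A; cases p) (simp add: mneg_def ap_def)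
lemma adj_mmul: "adj (mmul A B) = mmul (adj B) (adj A)"
  by (cases A; cases B) (simp add: mmul_def adj_def algebra_simps)

lemma SS: "mmul Sm Sm = mneg mid" by (simp add: mmul_def Sm_def mneg_def mid_def)

lemma gm_mul: "M \<in> GammaMat q \<Longrightarrow> N \<in> GammaMat q \<Longrightarrow> mmul M N \<in> GammaMat q"
  by (induction rule: GammaMat.induct) (auto simp: mmul_assoc intro: GammaMat.intros)
lemma gmT: "Tm q \<in> GammaMat q" using GammaMat.gm_T[OF GammaMat.gm_id] by simp
lemma gmTi: "Tinvm q \<in> GammaMat q" using GammaMat.gm_Tinv[OF GammaMat.gm_id] by simp
lemma gmS: "Sm \<in> GammaMat q" using GammaMat.gm_S[OF GammaMat.gm_id] by simp
lemma gm_negid: "mneg mid \<in> GammaMat q" using gm_mul[OF gmS gmS] SS by simp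
lemma gm_neg: "M \<in> GammaMat q \<Longrightarrow> mneg M \<in> GammaMat q" using gm_mul[OF gm_negid] by fastforce
lemma mdet_mmul: "mdet (mmul A B) = mdet A * mdet B"
  by (cases A; cases B) (simp add: mmul_def mdet_def algebra_simps)
lemma gm_det: "M \<in> GammaMat q \<Longrightarrow> mdet M = 1"
  by (induction rule: GammaMat.induct)
     (simp_all add: mdet_mmul, simp_all add: mdet_def mid_def Tm_def Tinvm_def Sm_def)
lemma gm_adj: "M \<in> GammaMat q \<Longrightarrow> adj M \<in> GammaMat q"
proof (induction rule: GammaMat.induct)
  case gm_id thus ?case by (simp add: adj_def mid_def GammaMat.gm_id[unfolded mid_def])
next
  case (gm_T M) have "adj (Tm q) = Tinvm q" by (simp add: adj_def Tm_def Tinvm_def)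
  thus ?case using gm_T gm_mul gmTi adj_mmul by metis
next
  case (gm_Tinv M) have "adj (Tinvm q) = Tm q" by (simp add: adj_def Tm_def Tinvm_def)
  thus ?case using gm_Tinv gm_mul gmT adj_mmul by metis
next
  case (gm_S M) have "adj Sm = mneg Sm" by (simp add: adj_def Sm_def mneg_def)
  thus ?case using gm_S gm_mul gm_neg[OF gmS] adj_mmul by metis
qed

lemma mob_simp: "mob (a,b,c,d) y = (a*y+b)/(c*y+d)" by (simp add: mob_def)

lemma div_div_cancel: "(D::real) \<noteq> 0 \<Longrightarrow> (X/D)/(Y/D) = X/Y"
  by (cases "Y = 0") (simp_all add: field_simps)

lemma mob_comp: "(case B of (e,f,g,h) \<Rightarrow> g*y+h) \<noteq> 0 \<Longrightarrow> mob (mmul A B) y = mob A (mob B y)"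
proof -
  obtain a b c d where A: "A = (a,b,c,d)" by (cases A) auto
  obtain e f g h where B: "B = (e,f,g,h)" by (cases B) auto
  assume "(case B of (e,f,g,h) \<Rightarrow> g*y+h) \<noteq> 0"
  hence D: "g*y+h \<noteq> 0" using B by simp
  have n: "a*((e*y+f)/(g*y+h)) + b = (a*(e*y+f) + b*(g*y+h))/(g*y+h)" using D by (simp add: field_simps)
  have dd: "c*((e*y+f)/(g*y+h)) + d = (c*(e*y+f) + d*(g*y+h))/(g*y+h)" using D by (simp add: field_simps)
  have "mob A (mob B y) = (a*((e*y+f)/(g*y+h)) + b) / (c*((e*y+f)/(g*y+h)) + d)"
    by (simp add: A B mob_def)
  also have "\<dots> = ((a*(e*y+f) + b*(g*y+h))/(g*y+h)) / ((c*(e*y+f) + d*(g*y+h))/(g*y+h))"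
    by (simp only: n dd)
  also have "\<dots> = (a*(e*y+f) + b*(g*y+h)) / (c*(e*y+f) + d*(g*y+h))" using div_div_cancel[OF D] by simp
  also have "\<dots> = mob (mmul A B) y" by (simp add: A B mob_def mmul_def algebra_simps)
  finally show ?thesis by simp
qed

lemma mob_mid[simp]: "mob mid y = y" by (simp add: mob_def mid_def)

lemma ap_ratio: "(r::real) \<noteq> 0 \<Longrightarrow> fst (ap M (p,r)) / snd (ap M (p,r)) = mob M (p/r)"
proof -
  obtain a b c d where A: "M = (a,b,c,d)" by (cases M) auto
  assume r: "r \<noteq> 0"
  have n: "a*(p/r) + b = (a*p + b*r)/r" using r by (simp add: field_simps)
  have dd: "c*(p/r) + d = (c*p + d*r)/r" using r by (simp add: field_simps)
  have "mob M (p/r) = ((a*p + b*r)/r) / ((c*p+d*r)/r)" unfolding A mob_simp n dd by (rule refl)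
  also have "\<dots> = (a*p + b*r) / (c*p+d*r)" by (rule div_div_cancel[OF r])
  finally have 1: "mob M (p/r) = (a*p + b*r) / (c*p+d*r)" .
  show ?thesis using 1 by (simp add: A ap_def)
qed

lemma ap_neg: "ap M (-x,-y) = (- fst (ap M (x,y)), - snd (ap M (x,y)))"
  by (cases M) (simp add: ap_def)

lemma pmclass_neg: "pmclass (-a) (-c) = pmclass a c" by (auto simp: pmclass_def)

lemma pmclass_eq: "pmclass a c = pmclass a' c' \<Longrightarrow> (a' = a \<and> c' = c) \<or> (a' = -a \<and> c' = -c)"
proof -
  assume h: "pmclass a c = pmclass a' c'"
  have "(a',c') \<in> pmclass a c" unfolding h by (simp add: pmclass_def)
  thus ?thesis by (auto simp: pmclass_def)
qed

lemma pmclass_ratio: "pmclass a c = pmclass a' c' \<Longrightarrow> a'/c' = a/(c::real)"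
proof -
  assume "pmclass a c = pmclass a' c'"
  from pmclass_eq[OF this] show ?thesis by auto
qed

locale hq = fixes q :: nat assumes oddq: "odd q" and q3: "q \<ge> 3"
begin

definition S :: "nat \<Rightarrow> real" where "S m = sq q (real m)"

lemma qnz: "real q \<noteq> 0" using q3 by simp

lemma th_pos: "sin (pi / real q) > 0"
proof -
  have "0 < pi / real q" using q3 by simp
  moreover have "pi / real q < pi" using q3 by (simp add: divide_less_eq)
  ultimately show ?thesis by (rule sin_gt_zero)
qed

lemma S_pos: "0 < m \<Longrightarrow> m < q \<Longrightarrow> S m > 0"
proof -
  assume "0 < m" "m < q"
  have "0 < real m * pi / real q" using \<open>0<m\<close> q3 by simp
  moreover have "real m * pi / real q < pi" using \<open>m<q\<close> q3 by (simp add: divide_less_eq)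
  ultimately have "sin (real m * pi / real q) > 0" by (rule sin_gt_zero)
  thus ?thesis unfolding S_def sq_def using th_pos by simp
qed

lemma S0[simp]: "S 0 = 0" unfolding S_def sq_def by simp
lemma S1[simp]: "S 1 = 1" unfolding S_def sq_def using th_pos by simp
lemma S1'[simp]: "S (Suc 0) = 1" using S1 by simp
lemma Sq[simp]: "S q = 0" unfolding S_def sq_def using q3 by simp

lemma S_rec: "S (m+2) = lam q * S (m+1) - S m"
proof -
  let ?t = "pi / real q"
  have a: "real (m+2) * pi / real q = real (m+1) * ?t + ?t" using qnz by (simp add: field_simps)
  have b: "real m * pi / real q = real (m+1) * ?t - ?t" using qnz by (simp add: field_simps)
  have c: "real (m+1) * pi / real q = real (m+1) * ?t" by simp
  show ?thesis unfolding S_def sq_def lam_def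
    apply (simp only: a b c sin_add sin_diff)
    using th_pos by (simp add: field_simps)
qed

lemma S_sym: "m \<le> q \<Longrightarrow> S (q - m) = S m"
proof -
  assume "m \<le> q"
  have "real (q - m) * pi / real q = pi - real m * pi / real q" using \<open>m\<le>q\<close> q3 by (simp add: field_simps of_nat_diff)
  thus ?thesis unfolding S_def sq_def by simp
qed

lemma S_det: "1 \<le> k \<Longrightarrow> (S k)^2 - S (k+1) * S (k-1) = 1"
proof -
  assume "1 \<le> k"
  let ?t = "pi / real q" and ?a = "real k * pi / real q"
  have a: "real (k+1) * pi / real q = ?a + ?t" using qnz by (simp add: field_simps)
  have b: "real (k-1) * pi / real q = ?a - ?t" using \<open>1\<le>k\<close> qnz by (simp add: field_simps of_nat_diff)
  have "(sin ?a)^2 - sin (?a + ?t) * sin (?a - ?t) = (sin ?t)^2"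
    unfolding sin_add sin_diff
    using sin_cos_squared_add[of ?a] sin_cos_squared_add[of ?t] by algebra
  thus ?thesis unfolding S_def sq_def a b using th_pos by (simp add: field_simps power2_eq_square)
qed

lemma S2: "S 2 = lam q" using S_rec[of 0] by (simp add: numeral_2_eq_2)
lemma S2'[simp]: "S (Suc (Suc 0)) = lam q" using S2 by (simp add: numeral_2_eq_2)
lemma Sqm1: "S (q - 1) = 1" using S_sym[of 1] q3 by simp
lemma Sqm1'[simp]: "S (q - Suc 0) = 1" using Sqm1 by simp
lemma Sqm2: "S (q - 2) = lam q" using S_sym[of 2] q3 S2 by simp
lemma Sqp1: "S (q + 1) = -1"
proof -
  have "S ((q-1)+2) = lam q * S ((q-1)+1) - S (q-1)" by (rule S_rec)
  moreover have "(q-1)+2 = q+1" "(q-1)+1 = q" using q3 by auto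
  ultimately show ?thesis using Sqm1 by simp
qed
lemma Sqp1'[simp]: "S (Suc q) = -1" using Sqp1 by simp

lemma zl_zero: "0 \<in> Zlam q" using Zlam.zl_diff[OF Zlam.zl_one Zlam.zl_one] by simp
lemma zl_add: "x \<in> Zlam q \<Longrightarrow> y \<in> Zlam q \<Longrightarrow> x + y \<in> Zlam q"
  using Zlam.zl_diff[OF _ Zlam.zl_diff[OF zl_zero]] by fastforce
lemma zl_neg: "x \<in> Zlam q \<Longrightarrow> - x \<in> Zlam q"
  using Zlam.zl_diff[OF zl_zero] by fastforce

lemma S_zlam: "S m \<in> Zlam q"
proof (induction m rule: nat_less_induct)
  case (1 m)
  show ?case
  proof (cases m)
    case 0 thus ?thesis using zl_zero by simp
  next
    case (Suc m') show ?thesis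
    proof (cases m')
      case 0 thus ?thesis using Suc Zlam.zl_one by simp
    next
      case (Suc m'') 
      have "S m = lam q * S (m''+1) - S m''" using S_rec[of m''] \<open>m = Suc m'\<close> Suc by simp
      thus ?thesis using 1 \<open>m = Suc m'\<close> Suc by (simp add: Zlam.zl_diff Zlam.zl_mult Zlam.zl_lam)
    qed
  qed
qed


definition Vp :: "nat \<Rightarrow> mat2" where "Vp j = (S (j+1), - S j, S j, - S (j-1))"

lemma S_nonneg: "m \<le> q \<Longrightarrow> S m \<ge> 0"
proof -
  assume "m \<le> q"
  consider "m = 0" | "m = q" | "0 < m \<and> m < q" using \<open>m \<le> q\<close> by linarith
  thus ?thesis using S_pos[of m] by cases auto
qed

lemma Vp1: "Vp 1 = mmul (Tm q) (mneg Sm)"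
  by (simp add: Vp_def mmul_def Tm_def Sm_def mneg_def S2)
lemma Vp_suc: "1 \<le> j \<Longrightarrow> mmul (Vp 1) (Vp j) = Vp (j+1)"
proof -
  assume "1 \<le> j"
  have r: "S (Suc (Suc j)) = lam q * S (Suc j) - S j" using S_rec[of j] by simp
  have r2: "S (Suc j) = lam q * S j - S (j - Suc 0)" using S_rec[of "j-1"] \<open>1\<le>j\<close> by simp
  show ?thesis by (simp add: Vp_def mmul_def S2 r r2 algebra_simps numeral_2_eq_2)
qed
lemma Vpq: "Vp q = mneg mid" by (simp add: Vp_def Sqp1 Sqm1 mneg_def mid_def)
lemma VS: "mmul (Vp 1) Sm = Tm q" by (simp add: Vp_def mmul_def Sm_def Tm_def S2)
lemma SVq: "mmul Sm (Vp (q-1)) = Tinvm q"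
proof -
  have "q - 1 - 1 = q - 2" "q - 1 + 1 = q" using q3 by auto
  thus ?thesis by (simp add: Vp_def mmul_def Sm_def Tinvm_def Sqm1 Sqm2)
qed

definition lv :: "nat \<Rightarrow> mat2" where "lv a = (if a = 0 then Sm else Vp a)"
definition val :: "nat list \<Rightarrow> mat2" where "val w = foldr (\<lambda>a M. mmul (lv a) M) w mid"
lemma val_simps[simp]: "val [] = mid" "val (a # t) = mmul (lv a) (val t)" by (simp_all add: val_def)

fun red :: "nat list \<Rightarrow> bool" where
  "red [] = True"
| "red [a] = (a < q)"
| "red (a # b # t) = (a < q \<and> (a = 0 \<longleftrightarrow> b \<noteq> 0) \<and> red (b # t))"

lemma red_tl: "red (a # t) \<Longrightarrow> red t" by (cases t) auto

definition NF :: "mat2 \<Rightarrow> bool" where "NF G \<longleftrightarrow> (\<exists>w. red w \<and> (G = val w \<or> G = mneg (val w)))"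

lemma NF_neg: "NF G \<Longrightarrow> NF (mneg G)" unfolding NF_def by auto

lemma NF_S0: "red w \<Longrightarrow> NF (mmul Sm (val w))"
proof (cases w)
  case Nil thus ?thesis unfolding NF_def using q3 by (intro exI[of _ "[0]"]) (simp add: lv_def)
next
  case (Cons a t) assume rw: "red w"
  show ?thesis
  proof (cases "a = 0")
    case True
    have "mmul Sm (val w) = mneg (val t)" using True Cons by (simp add: lv_def SS mmul_assoc[symmetric])
    thus ?thesis unfolding NF_def using red_tl rw Cons by blast
  next
    case False
    have "red (0 # w)" using rw Cons False q3 by simp
    thus ?thesis unfolding NF_def by (intro exI[of _ "0 # w"]) (simp add: lv_def)
  qed
qed

lemma NF_S: "NF G \<Longrightarrow> NF (mmul Sm G)"
  unfolding NF_def[of G] using NF_S0 NF_neg by (metis mneg_mmul(2))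

lemma NF_V0: "red w \<Longrightarrow> NF (mmul (Vp 1) (val w))"
proof (cases w)
  case Nil thus ?thesis unfolding NF_def using q3 by (intro exI[of _ "[1]"]) (simp add: lv_def)
next
  case (Cons a t) assume rw: "red w"
  show ?thesis
  proof (cases "a = 0")
    case True
    have "red (1 # w)" using rw Cons True q3 by (cases t) auto
    thus ?thesis unfolding NF_def by (intro exI[of _ "1 # w"]) (simp add: lv_def)
  next
    case False
    have e: "mmul (Vp 1) (val w) = mmul (Vp (a+1)) (val t)"
      using False Cons Vp_suc[of a] by (simp add: lv_def mmul_assoc[symmetric])
    have aq: "a < q" using rw Cons by (cases t) auto
    show ?thesis
    proof (cases "a + 1 = q")
      case True
      thus ?thesis using e Vpq red_tl rw Cons unfolding NF_def by auto
    next
      case F2: False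
      have "red ((a+1) # t)" using rw Cons F2 aq \<open>a \<noteq> 0\<close> by (cases t) auto
      thus ?thesis unfolding NF_def using e by (intro exI[of _ "(a+1) # t"]) (simp add: lv_def)
    qed
  qed
qed

lemma NF_V: "NF G \<Longrightarrow> NF (mmul (Vp 1) G)"
  unfolding NF_def[of G] using NF_V0 NF_neg by (metis mneg_mmul(2))

lemma NF_Vp: "1 \<le> j \<Longrightarrow> NF G \<Longrightarrow> NF (mmul (Vp j) G)"
proof (induction j rule: nat_induct_at_least)
  case base thus ?case using NF_V by simp
next
  case (Suc j)
  have "mmul (Vp (Suc j)) G = mmul (Vp 1) (mmul (Vp j) G)"
    using Vp_suc[OF Suc(1)] by (simp add: mmul_assoc[symmetric])
  thus ?case using Suc NF_V by simp
qed

lemma NF_gamma: "G \<in> GammaMat q \<Longrightarrow> NF G"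
proof (induction G rule: GammaMat.induct)
  case gm_id thus ?case unfolding NF_def by (intro exI[of _ "[]"]) simp
next
  case (gm_T M)
  have "mmul (Tm q) M = mmul (Vp 1) (mmul Sm M)" by (simp add: VS[symmetric] mmul_assoc)
  thus ?case using NF_V NF_S gm_T by simp
next
  case (gm_Tinv M)
  have "mmul (Tinvm q) M = mmul Sm (mmul (Vp (q-1)) M)" by (simp add: SVq[symmetric] mmul_assoc)
  thus ?case using NF_S NF_Vp[of "q-1"] gm_Tinv q3 by simp
next
  case (gm_S M) thus ?case using NF_S by simp
qed

definition EE :: "(real \<times> real) set" where "EE = {(1,0),(-1,0),(0,1),(0,-1)}"

lemma pingpong: "red w \<Longrightarrow> (let p = ap (val w) (1,0) in p \<in> EE \<or>
   (fst p * snd p > 0 \<and> w \<noteq> [] \<and> hd w \<noteq> 0) \<or> (fst p * snd p < 0 \<and> w \<noteq> [] \<and> hd w = 0))"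
proof (induction w)
  case Nil thus ?case by (simp add: EE_def ap_def mid_def)
next
  case (Cons a t)
  have rt: "red t" using Cons(2) red_tl by blast
  obtain x y where p: "ap (val t) (1,0) = (x,y)" by fastforce
  have IH: "(x,y) \<in> EE \<or> (x*y > 0 \<and> t \<noteq> [] \<and> hd t \<noteq> 0) \<or> (x*y < 0 \<and> t \<noteq> [] \<and> hd t = 0)"
    using Cons(1)[OF rt] p by (simp add: Let_def)
  have aq: "a < q" using Cons(2) by (cases t) auto
  have ap': "ap (val (a#t)) (1,0) = ap (lv a) (x,y)" using p by (simp add: ap_mmul)
  show ?case
  proof (cases "a = 0")
    case True
    have ht: "t = [] \<or> hd t \<noteq> 0" using Cons(2) True by (cases t) auto
    have e: "ap (lv a) (x,y) = (y, -x)" using True by (simp add: lv_def ap_def Sm_def)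
    from IH ht have "(x,y) \<in> EE \<or> x*y > 0" by auto
    thus ?thesis
    proof
      assume "(x,y) \<in> EE" thus ?thesis using ap' e by (auto simp: EE_def)
    next
      assume "x*y > 0" hence "y * (-x) < 0" by (simp add: mult.commute)
      thus ?thesis using ap' e True by simp
    qed
  next
    case False
    have ht: "t = [] \<or> hd t = 0" using Cons(2) False by (cases t) auto
    have e: "ap (lv a) (x,y) = (S (a+1) * x - S a * y, S a * x - S (a-1) * y)"
      using False by (simp add: lv_def ap_def Vp_def)
    have Sa: "S a > 0" using S_pos False aq by simp
    have Sa1: "S (a+1) \<ge> 0" using S_nonneg aq by simp
    have Sam: "S (a-1) \<ge> 0" using S_nonneg aq by simp
    from IH ht have "(x,y) \<in> EE \<or> x*y < 0" by auto
    thus ?thesis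
    proof
      assume "(x,y) \<in> EE"
      then consider "x = 1 \<and> y = 0" | "x = -1 \<and> y = 0" | "x = 0 \<and> y = 1" | "x = 0 \<and> y = -1"
        unfolding EE_def by auto
      thus ?thesis
      proof cases
        case 1
        show ?thesis
        proof (cases "a + 1 = q")
          case True
          have "S a = 1" using True Sqm1 by (metis add_diff_cancel_right')
          thus ?thesis using 1 ap' e True by (simp add: EE_def)
        next
          case F: False
          hence "S (a+1) > 0" using S_pos aq by simp
          thus ?thesis using 1 ap' e Sa False by simp
        qed
      next
        case 2
        show ?thesis
        proof (cases "a + 1 = q")
          case True
          have "S a = 1" using True Sqm1 by (metis add_diff_cancel_right')
          thus ?thesis using 2 ap' e True by (simp add: EE_def)
        next
          case F: False
          hence "S (a+1) > 0" using S_pos aq by simp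
          thus ?thesis using 2 ap' e Sa False by (simp add: mult_pos_pos)
        qed
      next
        case 3
        show ?thesis
        proof (cases "a = 1")
          case True thus ?thesis using 3 ap' e by (simp add: EE_def)
        next
          case F: False
          hence "S (a-1) > 0" using S_pos aq False by simp
          thus ?thesis using 3 ap' e Sa False by (simp add: mult_pos_pos)
        qed
      next
        case 4
        show ?thesis
        proof (cases "a = 1")
          case True thus ?thesis using 4 ap' e by (simp add: EE_def)
        next
          case F: False
          hence "S (a-1) > 0" using S_pos aq False by simp
          thus ?thesis using 4 ap' e Sa False by (simp add: mult_pos_pos)
        qed
      qed
    next
      assume xy: "x*y < 0"
      hence "(x > 0 \<and> y < 0) \<or> (x < 0 \<and> y > 0)" by (auto simp: mult_less_0_iff)
      hence "(S (a+1) * x - S a * y) * (S a * x - S (a-1) * y) > 0"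
      proof
        assume h: "x > 0 \<and> y < 0"
        have "S (a+1) * x \<ge> 0" "S a * y < 0" "S a * x > 0" "S (a-1) * y \<le> 0"
          using h Sa Sa1 Sam by (simp_all add: mult_pos_neg mult_nonneg_nonpos)
        hence "S (a+1) * x - S a * y > 0" "S a * x - S (a-1) * y > 0" by linarith+
        thus ?thesis by simp
      next
        assume h: "x < 0 \<and> y > 0"
        have "S (a+1) * x \<le> 0" "S a * y > 0" "S a * x < 0" "S (a-1) * y \<ge> 0"
          using h Sa Sa1 Sam by (simp_all add: mult_pos_neg mult_nonneg_nonpos mult_nonneg_nonneg)
        hence "S (a+1) * x - S a * y < 0" "S a * x - S (a-1) * y < 0" by linarith+
        thus ?thesis by (simp add: mult_neg_neg)
      qed
      thus ?thesis using ap' e False by simp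
    qed
  qed
qed

lemma stab: "(a,b,0,d) \<in> GammaMat q \<Longrightarrow> a = 1 \<or> a = -1"
proof -
  assume G: "(a,b,0,d) \<in> GammaMat q"
  obtain w where w: "red w" "(a,b,0,d) = val w \<or> (a,b,0,d) = mneg (val w)"
    using NF_gamma[OF G] unfolding NF_def by blast
  obtain x y where p: "ap (val w) (1,0) = (x,y)" by fastforce
  have "(x,y) \<in> EE \<or> x*y \<noteq> 0" using pingpong[OF w(1)] p by (auto simp: Let_def)
  moreover have "ap (a,b,0,d) (1,0) = (a, 0)" by (simp add: ap_def)
  ultimately have "(a = x \<and> y = 0 \<or> a = -x \<and> y = 0) \<and> ((x,y) \<in> EE \<or> x*y \<noteq> 0)"
    using w(2) p ap_mneg[of "val w" "(1,0)"] by auto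
  thus ?thesis unfolding EE_def by auto
qed

lemma uniq_frac:
  assumes "(v,b,w,d) \<in> GammaMat q" "(r,b',s,d') \<in> GammaMat q" "v * s = w * r"
  shows "(r = v \<and> s = w) \<or> (r = -v \<and> s = -w)"
proof -
  have H: "mmul (adj (v,b,w,d)) (r,b',s,d') \<in> GammaMat q" using gm_mul gm_adj assms by blast
  have "mmul (adj (v,b,w,d)) (r,b',s,d') = (d*r - b*s, d*b' - b*d', 0, v*d' - w*b')"
    using assms(3) by (simp add: adj_def mmul_def algebra_simps)
  hence h: "d*r - b*s = 1 \<or> d*r - b*s = -1" using stab H by metis
  have det: "v*d - b*w = 1" using gm_det[OF assms(1)] by (simp add: mdet_def)
  have e1: "v*(d*r-b*s) = r*(v*d-b*w) + b*(w*r - v*s)" by (simp add: algebra_simps)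
  have e2: "w*(d*r-b*s) = s*(v*d-b*w) + d*(w*r - v*s)" by (simp add: algebra_simps)
  have "r = v * (d*r - b*s)" "s = w * (d*r - b*s)" using e1 e2 det assms(3) by simp_all
  thus ?thesis using h by auto
qed


lemma V1_gm: "Vp 1 \<in> GammaMat q" using Vp1 gm_mul[OF gmT gm_neg[OF gmS]] by simp
lemma Vp_gm: "1 \<le> j \<Longrightarrow> Vp j \<in> GammaMat q"
proof (induction j rule: nat_induct_at_least)
  case base thus ?case using V1_gm by simp
next
  case (Suc j) thus ?case by (metis Vp_suc V1_gm gm_mul Suc_eq_plus1)
qed

definition k0 :: nat where "k0 = (q+1) div 2"
definition p0 :: nat where "p0 = (q-1) div 2"
lemma p0k0: "k0 = p0 + 1" "q = 2*p0 + 1" "p0 \<ge> 1" using oddq q3 unfolding k0_def p0_def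
  by (auto elim!: oddE)
lemma Kset_eq: "Kset q = {k0..q-1}" by (simp add: Kset_def k0_def)

definition L1 :: "nat \<Rightarrow> mat2" where "L1 k = (S k, S (k+1), S (k-1), S k)"
definition L2 :: "nat \<Rightarrow> mat2" where "L2 k = (S (k+1), S k, S k, S (k-1))"
definition Lb :: "bool \<Rightarrow> nat \<Rightarrow> mat2" where "Lb t k = (if t then L2 k else L1 k)"
definition rr :: "nat \<Rightarrow> real" where "rr j = S (j+1) / S j"
definition mm :: "nat \<Rightarrow> real" where "mm k = (S k + S (k+1)) / (S (k-1) + S k)"

lemma K_facts: "k \<in> Kset q \<Longrightarrow> 2 \<le> k \<and> k < q \<and> S k > 0 \<and> S (k-1) > 0 \<and> S (k+1) \<ge> 0 \<and> S k ^ 2 - S (k+1) * S (k-1) = 1"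
proof -
  assume k: "k \<in> Kset q"
  hence kb: "k0 \<le> k" "k \<le> q - 1" using Kset_eq by auto
  hence "2 \<le> k" "k < q" using p0k0 q3 by auto
  thus ?thesis using S_pos[of k] S_pos[of "k-1"] S_nonneg[of "k+1"] S_det[of k] by auto
qed

lemma gk_eq: "1 \<le> k \<Longrightarrow> gk q k = (S k, - S (k+1), - S (k-1), S k)"
  unfolding gk_def S_def using of_nat_diff[of 1 k] by (simp add: add.commute)

lemma minv_gk: "k \<in> Kset q \<Longrightarrow> minv (gk q k) = L1 k"
proof -
  assume k: "k \<in> Kset q"
  note kf = K_facts[OF k]
  have d: "mdet (gk q k) = 1" using kf by (simp add: gk_eq mdet_def power2_eq_square)
  show ?thesis using d kf by (simp add: minv_def gk_eq L1_def)
qed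

lemma minv_Qgk: "k \<in> Kset q \<Longrightarrow> minv (mmul Qm (gk q k)) = L2 k"
proof -
  assume k: "k \<in> Kset q"
  note kf = K_facts[OF k]
  have m: "mmul Qm (gk q k) = (- S (k-1), S k, S k, - S (k+1))" using kf by (simp add: gk_eq mmul_def Qm_def)
  have d: "mdet (mmul Qm (gk q k)) = -1" using kf by (simp add: m mdet_def power2_eq_square algebra_simps)
  show ?thesis using d kf by (simp add: minv_def m L2_def)
qed

lemma LamSet_eq: "LamSet q = {Lb t k | t k. k \<in> Kset q}"
proof (rule set_eqI, rule iffI)
  fix x assume "x \<in> LamSet q"
  then obtain k where k: "k \<in> Kset q" "x = minv (gk q k) \<or> x = minv (mmul Qm (gk q k))"
    unfolding LamSet_def by blast
  hence "x = Lb False k \<or> x = Lb True k" using minv_gk minv_Qgk by (auto simp: Lb_def)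
  thus "x \<in> {Lb t k | t k. k \<in> Kset q}" using k(1) by blast
next
  fix x assume "x \<in> {Lb t k | t k. k \<in> Kset q}"
  then obtain t k where k: "k \<in> Kset q" "x = Lb t k" by blast
  show "x \<in> LamSet q"
  proof (cases t)
    case True
    hence "x = minv (mmul Qm (gk q k))" using k minv_Qgk by (simp add: Lb_def)
    thus ?thesis unfolding LamSet_def using k(1) by blast
  next
    case False
    hence "x = minv (gk q k)" using k minv_gk by (simp add: Lb_def)
    thus ?thesis unfolding LamSet_def using k(1) by blast
  qed
qed

lemma rr_pos: "1 \<le> j \<Longrightarrow> j < q \<Longrightarrow> rr j \<ge> 0" unfolding rr_def using S_pos S_nonneg by simp

lemma rr_dec: "p0 \<le> j \<Longrightarrow> j + 1 \<le> q - 1 \<Longrightarrow> rr (j+1) < rr j"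
proof -
  assume j: "p0 \<le> j" "j + 1 \<le> q - 1"
  have pos: "S j > 0" "S (j+1) > 0" using S_pos j p0k0 by auto
  have d: "S (j+1) ^ 2 - S (j+2) * S j = 1" using S_det[of "j+1"] by simp
  have "S (j+2) * S j < S (j+1) * S (j+1)" using d by (simp add: power2_eq_square)
  thus ?thesis unfolding rr_def using pos by (simp add: divide_less_eq field_simps)
qed

lemma rr_anti0: "p0 \<le> j \<Longrightarrow> j + d \<le> q - 1 \<Longrightarrow> rr (j + d) \<le> rr j"
proof (induction d)
  case 0 thus ?case by simp
next
  case (Suc d) thus ?case using rr_dec[of "j+d"] by fastforce
qed
lemma rr_anti: "p0 \<le> j \<Longrightarrow> j \<le> j' \<Longrightarrow> j' \<le> q - 1 \<Longrightarrow> rr j' \<le> rr j"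
  using rr_anti0[of j "j' - j"] by simp

lemma rr_p0: "rr p0 = 1"
proof -
  have "q - p0 = p0 + 1" using p0k0 by simp
  hence "S (p0 + 1) = S (q - p0)" by simp
  also have "\<dots> = S p0" using S_sym p0k0 by simp
  finally show ?thesis unfolding rr_def using S_pos[of p0] p0k0 by simp
qed
lemma rr_last: "rr (q-1) = 0" unfolding rr_def using q3 by simp

lemma med: "k \<in> Kset q \<Longrightarrow> rr k < mm k \<and> mm k < rr (k-1)"
proof -
  assume k: "k \<in> Kset q"
  note kf = K_facts[OF k]
  have k1: "k - 1 + 1 = k" using kf by simp
  have e: "S (k+1) * S (k-1) < S k * S k" using kf by (simp add: power2_eq_square)
  have a: "S (k+1) * (S (k-1) + S k) < S k * (S k + S (k+1))" using e by (simp add: algebra_simps)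
  have b: "S (k-1) * (S k + S (k+1)) < S k * (S (k-1) + S k)" using e by (simp add: algebra_simps)
  have "rr k < mm k" unfolding rr_def mm_def using a kf by (simp add: divide_less_eq less_divide_eq mult.commute add_pos_pos)
  moreover have "mm k < rr (k-1)" unfolding rr_def mm_def k1 using b kf
    by (simp add: divide_less_eq less_divide_eq mult.commute add_pos_pos)
  ultimately show ?thesis ..
qed

definition fb :: "bool \<Rightarrow> nat \<Rightarrow> real \<Rightarrow> real" where "fb t k y = mob (Lb t k) y"

lemma mob_diff: "c*y1+d \<noteq> 0 \<Longrightarrow> c*y2+d \<noteq> 0 \<Longrightarrow>
  mob (a,b,c,d) y1 - mob (a,b,c,d) y2 = (a*d - b*c) * (y1 - y2) / ((c*y1+d)*(c*y2+d))"
  by (simp add: mob_def field_simps)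

lemma fb_den: "k \<in> Kset q \<Longrightarrow> 0 \<le> y \<Longrightarrow> S (k-1) * y + S k > 0 \<and> S k * y + S (k-1) > 0"
  using K_facts[of k] by (simp add: add_pos_nonneg add_nonneg_pos)

lemma fb_diff: "k \<in> Kset q \<Longrightarrow> 0 \<le> y1 \<Longrightarrow> 0 \<le> y2 \<Longrightarrow>
   fb t k y1 - fb t k y2 = (if t then -1 else 1) * (y1 - y2) / ((if t then (S k*y1+S (k-1))*(S k*y2+S (k-1)) else (S (k-1)*y1+S k)*(S (k-1)*y2+S k)))"
proof -
  assume k: "k \<in> Kset q" "0 \<le> y1" "0 \<le> y2"
  note kf = K_facts[OF k(1)]
  have d1: "S k * S k - S (k+1) * S (k-1) = 1" using kf by (simp add: power2_eq_square)
  show ?thesis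
  proof (cases t)
    case True
    have L: "Lb t k = (S (k+1), S k, S k, S (k-1))" using True by (simp add: Lb_def L2_def)
    have "fb t k y1 - fb t k y2 = (S (k+1) * S (k-1) - S k * S k) * (y1 - y2) / ((S k*y1+S (k-1))*(S k*y2+S (k-1)))"
      unfolding fb_def L using fb_den[OF k(1) k(2)] fb_den[OF k(1) k(3)]
      by (subst mob_diff) auto
    thus ?thesis using True d1 by (simp add: algebra_simps)
  next
    case False
    have L: "Lb t k = (S k, S (k+1), S (k-1), S k)" using False by (simp add: Lb_def L1_def)
    have "fb t k y1 - fb t k y2 = (S k * S k - S (k+1) * S (k-1)) * (y1 - y2) / ((S (k-1)*y1+S k)*(S (k-1)*y2+S k))"
      unfolding fb_def L using fb_den[OF k(1) k(2)] fb_den[OF k(1) k(3)]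
      by (subst mob_diff) auto
    thus ?thesis using False d1 by simp
  qed
qed

lemma fb_mono: "k \<in> Kset q \<Longrightarrow> 0 \<le> y1 \<Longrightarrow> y1 < y2 \<Longrightarrow>
   (if t then fb t k y2 < fb t k y1 else fb t k y1 < fb t k y2)"
proof -
  assume k: "k \<in> Kset q" "0 \<le> y1" "y1 < y2"
  have dp: "(S k*y1+S (k-1))*(S k*y2+S (k-1)) > 0" "(S (k-1)*y1+S k)*(S (k-1)*y2+S k) > 0"
    using fb_den[OF k(1) k(2)] fb_den[OF k(1), of y2] k by auto
  have e: "fb t k y1 - fb t k y2 = (if t then -1 else 1) * (y1 - y2) / ((if t then (S k*y1+S (k-1))*(S k*y2+S (k-1)) else (S (k-1)*y1+S k)*(S (k-1)*y2+S k)))"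
    using fb_diff[OF k(1) k(2)] k by simp
  show ?thesis
  proof (cases t)
    case True
    have "fb t k y1 - fb t k y2 > 0" using e True dp k by (simp add: divide_pos_pos)
    thus ?thesis using True by simp
  next
    case False
    have "fb t k y1 - fb t k y2 < 0" using e False dp k by (simp add: divide_neg_pos)
    thus ?thesis using False by simp
  qed
qed

lemma fb_inj: "k \<in> Kset q \<Longrightarrow> 0 \<le> y1 \<Longrightarrow> 0 \<le> y2 \<Longrightarrow> fb t k y1 = fb t k y2 \<Longrightarrow> y1 = y2"
  using fb_mono[of k y1 y2 t] fb_mono[of k y2 y1 t] by (cases "y1 < y2"; cases "y2 < y1"; auto split: if_splits)

lemma fb_0: "k \<in> Kset q \<Longrightarrow> fb False k 0 = rr k \<and> fb True k 0 = rr (k-1)"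
  using K_facts[of k] by (simp add: fb_def Lb_def L1_def L2_def mob_def rr_def)
lemma fb_1: "k \<in> Kset q \<Longrightarrow> fb False k 1 = mm k \<and> fb True k 1 = mm k"
  using K_facts[of k] by (simp add: fb_def Lb_def L1_def L2_def mob_def mm_def add.commute)

lemma fb_range: "k \<in> Kset q \<Longrightarrow> 0 \<le> y \<Longrightarrow> y \<le> 1 \<Longrightarrow>
   (if t then mm k \<le> fb t k y \<and> fb t k y \<le> rr (k-1) else rr k \<le> fb t k y \<and> fb t k y \<le> mm k)
   \<and> (fb t k y = (if t then rr (k-1) else rr k) \<longleftrightarrow> y = 0)
   \<and> (fb t k y = mm k \<longleftrightarrow> y = 1)"
proof -
  assume k: "k \<in> Kset q" "0 \<le> y" "y \<le> 1"
  have m0: "y = 0 \<or> 0 < y" using k by auto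
  have m1: "y = 1 \<or> y < 1" using k by auto
  have A: "0 < y \<Longrightarrow> (if t then fb t k y < fb t k 0 else fb t k 0 < fb t k y)" using fb_mono[OF k(1), of 0 y t] by simp
  have B: "y < 1 \<Longrightarrow> (if t then fb t k 1 < fb t k y else fb t k y < fb t k 1)" using fb_mono[OF k(1) k(2), of 1 t] by simp
  show ?thesis using m0 m1 A B fb_0[OF k(1)] fb_1[OF k(1)] med[OF k(1)]
    by (cases t) (auto simp: less_imp_le)
qed

lemma rr_k_bounds: "k \<in> Kset q \<Longrightarrow> 0 \<le> rr k \<and> rr (k-1) \<le> 1"
proof -
  assume k: "k \<in> Kset q"
  have kb: "k0 \<le> k" "k \<le> q - 1" using k Kset_eq by auto
  have "rr k \<ge> rr (q-1)" using rr_anti[of k "q-1"] kb p0k0 by simp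
  moreover have "rr (k-1) \<le> rr p0" using rr_anti[of p0 "k-1"] kb p0k0 by simp
  ultimately show ?thesis using rr_last rr_p0 by simp
qed

lemma fb_unit: "k \<in> Kset q \<Longrightarrow> 0 \<le> y \<Longrightarrow> y \<le> 1 \<Longrightarrow> 0 \<le> fb t k y \<and> fb t k y \<le> 1"
  using fb_range[of k y t] rr_k_bounds[of k] med[of k] by (cases t) auto

lemma fb_open: "k \<in> Kset q \<Longrightarrow> 0 < y \<Longrightarrow> y \<le> 1 \<Longrightarrow> 0 < fb t k y \<and> fb t k y < 1"
proof -
  assume k: "k \<in> Kset q" "0 < y" "y \<le> 1"
  note R = fb_range[of k y t] and B = rr_k_bounds[OF k(1)] and M = med[OF k(1)]
  show ?thesis
  proof (cases t)
    case True
    have "mm k \<le> fb t k y" "fb t k y \<le> rr (k-1)" "fb t k y \<noteq> rr (k-1)" using R k True by auto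
    thus ?thesis using B M by linarith
  next
    case False
    have "rr k \<le> fb t k y" "fb t k y \<le> mm k" "fb t k y \<noteq> rr k" using R k False by auto
    thus ?thesis using B M by linarith
  qed
qed

lemma inter_lt: "k1 \<in> Kset q \<Longrightarrow> k2 \<in> Kset q \<Longrightarrow> k1 < k2 \<Longrightarrow> y1 \<in> {0..1} \<Longrightarrow> y2 \<in> {0..1} \<Longrightarrow>
   fb t1 k1 y1 = fb t2 k2 y2 \<Longrightarrow> y1 = 0 \<and> y2 = 0"
proof -
  assume k: "k1 \<in> Kset q" "k2 \<in> Kset q" "k1 < k2" "y1 \<in> {0..1}" "y2 \<in> {0..1}" "fb t1 k1 y1 = fb t2 k2 y2"
  have kb: "k0 \<le> k1" "k2 \<le> q - 1" using k Kset_eq by auto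
  have anti: "rr (k2 - 1) \<le> rr k1" using rr_anti[of k1 "k2-1"] kb k p0k0 by simp
  have R1: "rr k1 \<le> fb t1 k1 y1" using fb_range[of k1 y1 t1] med[of k1] k by (cases t1) auto
  have R2: "fb t2 k2 y2 \<le> rr (k2-1)" using fb_range[of k2 y2 t2] med[of k2] k by (cases t2) auto
  have x1: "fb t1 k1 y1 = rr k1" using R1 R2 anti k(6) by simp
  have x2: "fb t2 k2 y2 = rr (k2-1)" using R1 R2 anti k(6) by simp
  have M1: "rr k1 < mm k1" using med k by blast
  have M2: "mm k2 < rr (k2-1)" using med k by blast
  have "\<not> t1"
  proof
    assume t1 have "mm k1 \<le> fb t1 k1 y1" using fb_range[of k1 y1 t1] k \<open>t1\<close> by auto
    thus False using x1 M1 by linarith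
  qed
  hence "y1 = 0" using fb_range[of k1 y1 t1] k x1 by auto
  moreover have "t2"
  proof (rule ccontr)
    assume "\<not> t2" hence "fb t2 k2 y2 \<le> mm k2" using fb_range[of k2 y2 t2] k by auto
    thus False using x2 M2 by linarith
  qed
  hence "y2 = 0" using fb_range[of k2 y2 t2] k x2 by auto
  ultimately show ?thesis by simp
qed

lemma inter: "k1 \<in> Kset q \<Longrightarrow> k2 \<in> Kset q \<Longrightarrow> y1 \<in> {0..1} \<Longrightarrow> y2 \<in> {0..1} \<Longrightarrow>
   fb t1 k1 y1 = fb t2 k2 y2 \<Longrightarrow> y1 = y2 \<and> ((k1 = k2 \<and> t1 = t2) \<or> y1 = 0 \<or> (y1 = 1 \<and> k1 = k2))"
proof -
  assume k: "k1 \<in> Kset q" "k2 \<in> Kset q" "y1 \<in> {0..1}" "y2 \<in> {0..1}" "fb t1 k1 y1 = fb t2 k2 y2"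
  consider "k1 < k2" | "k2 < k1" | "k1 = k2" by linarith
  thus ?thesis
  proof cases
    case 1 thus ?thesis using inter_lt k by blast
  next
    case 2 thus ?thesis using inter_lt[of k2 k1 y2 y1 t2 t1] k by auto
  next
    case 3
    show ?thesis
    proof (cases "t1 = t2")
      case True thus ?thesis using fb_inj[of k1 y1 y2 t1] k 3 by auto
    next
      case False
      have "fb t1 k1 y1 = mm k1 \<and> fb t2 k2 y2 = mm k1"
        using fb_range[of k1 y1 t1] fb_range[of k1 y2 t2] k 3 False by (cases t1; cases t2) auto
      thus ?thesis using fb_range[of k1 y1 t1] fb_range[of k1 y2 t2] k 3 by auto
    qed
  qed
qed

end



lemma wprod_Nil[simp]: "wprod [] = mid" by (simp add: wprod_def)
lemma wprod_Cons[simp]: "wprod (M # ws) = mmul M (wprod ws)" by (simp add: wprod_def)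
lemma wprod_snoc: "wprod (ws @ [M]) = mmul (wprod ws) M"
  by (induction ws) (simp_all add: mmul_assoc)

lemma Words_Suc: "ws \<in> Words q (Suc n) \<longleftrightarrow> (\<exists>M ws'. ws = M # ws' \<and> M \<in> LamSet q \<and> ws' \<in> Words q n)"
  unfolding Words_def by (cases ws) auto
lemma Words_0: "Words q 0 = {[]}" unfolding Words_def by auto

definition qconj :: "mat2 \<Rightarrow> mat2" where "qconj M = mmul Qm (mmul M Qm)"
lemma QQ: "mmul Qm Qm = mid" by (simp add: mmul_def Qm_def mid_def)
lemma qconj_mul: "qconj (mmul A B) = mmul (qconj A) (qconj B)"
proof -
  have "mmul (qconj A) (qconj B) = mmul Qm (mmul A (mmul (mmul Qm Qm) (mmul B Qm)))"
    unfolding qconj_def by (simp add: mmul_assoc)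
  thus ?thesis by (simp add: QQ qconj_def mmul_assoc)
qed

lemma gm_qconj: "G \<in> GammaMat q \<Longrightarrow> qconj G \<in> GammaMat q"
proof (induction rule: GammaMat.induct)
  case gm_id thus ?case using QQ by (simp add: qconj_def GammaMat.gm_id)
next
  case (gm_T M)
  have "qconj (Tm q) = mmul Sm (mmul (Tinvm q) (mneg Sm))"
    by (simp add: qconj_def mmul_def Qm_def Tm_def Tinvm_def Sm_def mneg_def)
  hence "qconj (Tm q) \<in> GammaMat q" using gm_mul gmS gmTi gm_neg by metis
  thus ?case using gm_T qconj_mul gm_mul by metis
next
  case (gm_Tinv M)
  have "qconj (Tinvm q) = mmul Sm (mmul (Tm q) (mneg Sm))"
    by (simp add: qconj_def mmul_def Qm_def Tm_def Tinvm_def Sm_def mneg_def)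
  hence "qconj (Tinvm q) \<in> GammaMat q" using gm_mul gmS gmT gm_neg by metis
  thus ?case using gm_Tinv qconj_mul gm_mul by metis
next
  case (gm_S M)
  have "qconj Sm = mneg Sm" by (simp add: qconj_def mmul_def Qm_def Sm_def mneg_def)
  hence "qconj Sm \<in> GammaMat q" using gmS gm_neg by metis
  thus ?case using gm_S qconj_mul gm_mul by metis
qed

context hq begin

lemma zl_lin: "a \<in> Zlam q \<Longrightarrow> b \<in> Zlam q \<Longrightarrow> x \<in> Zlam q \<Longrightarrow> y \<in> Zlam q \<Longrightarrow> a*x + b*y \<in> Zlam q"
  using zl_add Zlam.zl_mult by blast

lemma rf_swap: "reduced_frac q a c \<Longrightarrow> reduced_frac q c a"
proof -
  assume "reduced_frac q a c"
  then obtain b d where G: "(a,b,c,d) \<in> GammaMat q" "a \<in> Zlam q" "c \<in> Zlam q"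
    unfolding reduced_frac_def by blast
  have "mmul (qconj (a,b,c,d)) (mneg Sm) = (c, -d, a, -b)"
    by (simp add: qconj_def mmul_def Qm_def Sm_def mneg_def)
  moreover have "mmul (qconj (a,b,c,d)) (mneg Sm) \<in> GammaMat q"
    using gm_mul[OF gm_qconj[OF G(1)] gm_neg[OF gmS]] .
  ultimately show ?thesis using G unfolding reduced_frac_def by metis
qed

lemma rf_gm: "G \<in> GammaMat q \<Longrightarrow> G = (e,f,g,h) \<Longrightarrow> e \<in> Zlam q \<Longrightarrow> f \<in> Zlam q \<Longrightarrow> g \<in> Zlam q \<Longrightarrow> h \<in> Zlam q \<Longrightarrow>
   reduced_frac q a c \<Longrightarrow> reduced_frac q (e*a + f*c) (g*a + h*c)"
proof -
  assume G: "G \<in> GammaMat q" "G = (e,f,g,h)" "e \<in> Zlam q" "f \<in> Zlam q" "g \<in> Zlam q" "h \<in> Zlam q"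
    and "reduced_frac q a c"
  then obtain b d where A: "(a,b,c,d) \<in> GammaMat q" "a \<in> Zlam q" "c \<in> Zlam q"
    unfolding reduced_frac_def by blast
  have "mmul G (a,b,c,d) \<in> GammaMat q" using gm_mul G(1) A(1) by blast
  moreover have "mmul G (a,b,c,d) = (e*a + f*c, e*b+f*d, g*a + h*c, g*b+h*d)" using G(2) by (simp add: mmul_def)
  ultimately show ?thesis unfolding reduced_frac_def using zl_lin G A by metis
qed

lemma L1_gm: "k \<in> Kset q \<Longrightarrow> L1 k \<in> GammaMat q"
proof -
  assume k: "k \<in> Kset q"
  note kf = K_facts[OF k]
  have "mmul (Vp k) Sm = L1 k" by (simp add: Vp_def mmul_def Sm_def L1_def)
  moreover have "Vp k \<in> GammaMat q" using Vp_gm kf by simp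
  ultimately show ?thesis using gm_mul[OF _ gmS] by metis
qed

definition Gi :: "bool \<Rightarrow> nat \<Rightarrow> mat2" where
  "Gi t k = (if t then (- S (k-1), S k, S k, - S (k+1)) else (S k, - S (k+1), - S (k-1), S k))"

lemma Gi_Lb: "k \<in> Kset q \<Longrightarrow> mmul (Gi t k) (Lb t k) = mid \<and> mmul (Lb t k) (Gi t k) = mid"
proof -
  assume k: "k \<in> Kset q"
  note kf = K_facts[OF k]
  have d: "S k * S k - S (k+1) * S (k-1) = 1" using kf by (simp add: power2_eq_square)
  show ?thesis using d by (cases t) (simp_all add: Gi_def Lb_def L1_def L2_def mmul_def mid_def algebra_simps)
qed

lemma rf_Lb: "k \<in> Kset q \<Longrightarrow> reduced_frac q a c \<Longrightarrow> reduced_frac q (fst (ap (Lb t k) (a,c))) (snd (ap (Lb t k) (a,c)))"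
proof -
  assume k: "k \<in> Kset q" and r: "reduced_frac q a c"
  have z: "S k \<in> Zlam q" "S (k+1) \<in> Zlam q" "S (k-1) \<in> Zlam q" using S_zlam by auto
  have r1: "reduced_frac q (S k * a + S (k+1) * c) (S (k-1) * a + S k * c)"
    using rf_gm[OF L1_gm[OF k] L1_def z(1) z(2) z(3) z(1) r] .
  have r2: "reduced_frac q (S k * c + S (k+1) * a) (S (k-1) * c + S k * a)"
    using rf_gm[OF L1_gm[OF k] L1_def z(1) z(2) z(3) z(1) rf_swap[OF r]] .
  show ?thesis
    using r1 r2 by (cases t) (simp_all add: Lb_def L1_def L2_def ap_def add.commute)
qed

lemma rf_Gi: "k \<in> Kset q \<Longrightarrow> reduced_frac q a c \<Longrightarrow> reduced_frac q (fst (ap (Gi t k) (a,c))) (snd (ap (Gi t k) (a,c)))"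
proof -
  assume k: "k \<in> Kset q" and r: "reduced_frac q a c"
  have z: "S k \<in> Zlam q" "- S (k+1) \<in> Zlam q" "- S (k-1) \<in> Zlam q" using S_zlam zl_neg by auto
  have g: "adj (L1 k) \<in> GammaMat q" using gm_adj L1_gm k by blast
  have r1: "reduced_frac q (S k * a + - S (k+1) * c) (- S (k-1) * a + S k * c)"
    using rf_gm[OF g _ z(1) z(2) z(3) z(1) r] by (simp add: adj_def L1_def)
  have r2: "reduced_frac q (- S (k-1) * a + S k * c) (S k * a + - S (k+1) * c)"
    using rf_swap[OF r1] .
  show ?thesis
    using r1 r2 by (cases t) (simp_all add: Gi_def ap_def)
qed

lemma branch_inv1: "k \<in> Kset q \<Longrightarrow> rr k \<le> x \<Longrightarrow> x \<le> mm k \<Longrightarrow>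
   mob (gk q k) x \<in> {0..1} \<and> fb False k (mob (gk q k) x) = x \<and> - S (k-1) * x + S k > 0"
proof -
  assume k: "k \<in> Kset q" and x: "rr k \<le> x" "x \<le> mm k"
  note kf = K_facts[OF k]
  have k1: "k - 1 + 1 = k" using kf by simp
  have "x < S k / S (k-1)" using med[OF k] x unfolding rr_def k1 by linarith
  hence D: "- S (k-1) * x + S k > 0" using kf by (simp add: less_divide_eq mult.commute)
  have g: "gk q k = (S k, - S (k+1), - S (k-1), S k)" using gk_eq kf by simp
  have y: "mob (gk q k) x = (S k * x - S (k+1)) / (- S (k-1) * x + S k)" by (simp add: g mob_def)
  have "S (k+1) \<le> S k * x" using x(1) kf unfolding rr_def by (simp add: divide_le_eq mult.commute)
  hence y0: "0 \<le> mob (gk q k) x" using y D by simp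
  have "x * (S (k-1) + S k) \<le> S k + S (k+1)" using x(2) kf unfolding mm_def
    by (simp add: le_divide_eq add_pos_pos)
  hence "S k * x - S (k+1) \<le> - S (k-1) * x + S k" by (simp add: algebra_simps)
  hence y1: "mob (gk q k) x \<le> 1" using y D by simp
  have "fb False k (mob (gk q k) x) = mob (mmul (L1 k) (gk q k)) x"
    unfolding fb_def Lb_def using mob_comp[where A="L1 k" and B="gk q k" and y=x] D by (simp add: g)
  also have "mmul (L1 k) (gk q k) = mid" using Gi_Lb[OF k, of False] g by (simp add: Gi_def Lb_def)
  finally show ?thesis using y0 y1 D by simp
qed

lemma branch_inv2: "k \<in> Kset q \<Longrightarrow> mm k \<le> x \<Longrightarrow> x \<le> rr (k-1) \<Longrightarrow>
   mob (mmul Qm (gk q k)) x \<in> {0..1} \<and> fb True k (mob (mmul Qm (gk q k)) x) = x \<and> S k * x - S (k+1) > 0"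
proof -
  assume k: "k \<in> Kset q" and x: "mm k \<le> x" "x \<le> rr (k-1)"
  note kf = K_facts[OF k]
  have k1: "k - 1 + 1 = k" using kf by simp
  have "S (k+1) / S k < x" using med[OF k] x unfolding rr_def by linarith
  hence D: "S k * x - S (k+1) > 0" using kf by (simp add: divide_less_eq mult.commute)
  have g: "mmul Qm (gk q k) = (- S (k-1), S k, S k, - S (k+1))" using gk_eq kf by (simp add: mmul_def Qm_def)
  have y: "mob (mmul Qm (gk q k)) x = (S k - S (k-1) * x) / (S k * x - S (k+1))" by (simp add: g mob_def)
  have "S (k-1) * x \<le> S k" using x(2) kf unfolding rr_def k1 by (simp add: le_divide_eq mult.commute)
  hence y0: "0 \<le> mob (mmul Qm (gk q k)) x" using y D by simp
  have "S k + S (k+1) \<le> x * (S (k-1) + S k)" using x(1) kf unfolding mm_def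
    by (simp add: divide_le_eq add_pos_pos)
  hence "S k - S (k-1) * x \<le> S k * x - S (k+1)" by (simp add: algebra_simps)
  hence y1: "mob (mmul Qm (gk q k)) x \<le> 1" using y D by simp
  have "fb True k (mob (mmul Qm (gk q k)) x) = mob (mmul (L2 k) (mmul Qm (gk q k))) x"
    unfolding fb_def Lb_def using mob_comp[where A="L2 k" and B="mmul Qm (gk q k)" and y=x] D by (simp add: g)
  also have "mmul (L2 k) (mmul Qm (gk q k)) = mid" using Gi_Lb[OF k, of True] g by (simp add: Gi_def Lb_def)
  finally show ?thesis using y0 y1 D by simp
qed

lemma minv_ends: "k \<in> Kset q \<Longrightarrow> mob (minv (gk q k)) 0 = rr k \<and> mob (minv (gk q k)) 1 = mm k \<and>
   mob (minv (mmul Qm (gk q k))) 1 = mm k \<and> mob (minv (mmul Qm (gk q k))) 0 = rr (k-1)"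
  using fb_0[of k] fb_1[of k] minv_gk[of k] minv_Qgk[of k] by (simp add: fb_def Lb_def)

lemma fbranch_fb: "k \<in> Kset q \<Longrightarrow> y \<in> {0..1} \<Longrightarrow> Fbranch q (fb t k y) y"
proof -
  assume k: "k \<in> Kset q" and y: "y \<in> {0..1}"
  show ?thesis
  proof (cases t)
    case False
    let ?x = "fb t k y"
    have xr: "rr k \<le> ?x" "?x \<le> mm k" using fb_range[of k y t] k y False by auto
    note B = branch_inv1[OF k xr]
    have "mob (gk q k) ?x = y" using fb_inj[of k "mob (gk q k) ?x" y False] B k y False by auto
    thus ?thesis unfolding Fbranch_def using k xr minv_ends[OF k] by (intro bexI[OF _ k]) auto
  next
    case True
    let ?x = "fb t k y"
    have xr: "mm k \<le> ?x" "?x \<le> rr (k-1)" using fb_range[of k y t] k y True by auto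
    note B = branch_inv2[OF k xr]
    have "mob (mmul Qm (gk q k)) ?x = y" using fb_inj[of k "mob (mmul Qm (gk q k)) ?x" y True] B k y True by auto
    thus ?thesis unfolding Fbranch_def using k xr minv_ends[OF k] by (intro bexI[OF _ k]) auto
  qed
qed

lemma fbranch_inv: "Fbranch q x y \<Longrightarrow> \<exists>k\<in>Kset q. \<exists>t. y \<in> {0..1} \<and> x = fb t k y"
proof -
  assume "Fbranch q x y"
  then obtain k where k: "k \<in> Kset q" and
    h: "(x \<in> {rr k .. mm k} \<and> y = mob (gk q k) x) \<or> (x \<in> {mm k .. rr (k-1)} \<and> y = mob (mmul Qm (gk q k)) x)"
    unfolding Fbranch_def using minv_ends by auto
  from h show ?thesis
  proof
    assume a: "x \<in> {rr k .. mm k} \<and> y = mob (gk q k) x"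
    thus ?thesis using branch_inv1[OF k] k by (intro bexI[OF _ k] exI[of _ False]) auto
  next
    assume a: "x \<in> {mm k .. rr (k-1)} \<and> y = mob (mmul Qm (gk q k)) x"
    thus ?thesis using branch_inv2[OF k] k by (intro bexI[OF _ k] exI[of _ True]) auto
  qed
qed

lemma Fq_fb: "k \<in> Kset q \<Longrightarrow> y \<in> {0..1} \<Longrightarrow> Fq q (fb t k y) = y"
proof -
  assume k: "k \<in> Kset q" and y: "y \<in> {0..1}"
  have "Fbranch q (fb t k y) (Fq q (fb t k y))" unfolding Fq_def by (rule someI, rule fbranch_fb[OF k y])
  then obtain k' t' where "k' \<in> Kset q" "Fq q (fb t k y) \<in> {0..1}" "fb t k y = fb t' k' (Fq q (fb t k y))"
    using fbranch_inv by blast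
  thus ?thesis using inter[of k k' y "Fq q (fb t k y)" t t'] k y by auto
qed

lemma cover_rr: "p0 \<le> q - 1 - d \<Longrightarrow> 0 \<le> x \<Longrightarrow> x \<le> rr (q - 1 - d) \<Longrightarrow> \<exists>k\<in>Kset q. rr k \<le> x \<and> x \<le> rr (k-1)"
proof (induction d arbitrary: x)
  case 0
  have x0: "x = 0" using 0 rr_last by simp
  have K: "q - 1 \<in> Kset q" using p0k0 Kset_eq by auto
  have "rr (q - 1 - 1) \<ge> 0" using rr_pos[of "q-1-1"] q3 by simp
  thus ?case using K x0 rr_last by (intro bexI[OF _ K]) auto
next
  case (Suc d)
  let ?j = "q - 1 - Suc d"
  show ?case
  proof (cases "rr (?j + 1) \<le> x")
    case True
    have jj: "?j + 1 = q - 1 - d" using Suc.prems(1) p0k0 by auto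
    have K: "?j + 1 \<in> Kset q" using Suc.prems(1) p0k0 Kset_eq by auto
    thus ?thesis using True Suc.prems by (intro bexI[OF _ K]) auto
  next
    case False
    have jj: "?j + 1 = q - 1 - d" using Suc.prems(1) p0k0 by auto
    thus ?thesis using Suc.IH[of x] Suc.prems False by auto
  qed
qed

lemma cover: "x \<in> {0..1} \<Longrightarrow> \<exists>k\<in>Kset q. \<exists>t. \<exists>y\<in>{0..1}. x = fb t k y"
proof -
  assume x: "x \<in> {0..1}"
  have "q - 1 - (q - 1 - p0) = p0" using p0k0 by auto
  then obtain k where k: "k \<in> Kset q" "rr k \<le> x" "x \<le> rr (k-1)"
    using cover_rr[of "q - 1 - p0" x] x rr_p0 by auto
  show ?thesis
  proof (cases "x \<le> mm k")
    case True
    thus ?thesis using branch_inv1[OF k(1) k(2) True] k(1) by metis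
  next
    case False
    thus ?thesis using branch_inv2[OF k(1) _ k(3)] k(1) by (metis linear)
  qed
qed

lemma Lb_ap_snd: "k \<in> Kset q \<Longrightarrow> r \<noteq> 0 \<Longrightarrow> 0 \<le> p/r \<Longrightarrow> snd (ap (Lb t k) (p,r)) \<noteq> 0"
proof -
  assume k: "k \<in> Kset q" and r: "r \<noteq> 0" and y: "0 \<le> p/r"
  have D: "S (k-1) * (p/r) + S k > 0 \<and> S k * (p/r) + S (k-1) > 0" using fb_den[OF k y] .
  have "snd (ap (Lb t k) (p,r)) = r * (if t then S k * (p/r) + S (k-1) else S (k-1) * (p/r) + S k)"
    using r by (cases t) (simp_all add: Lb_def L1_def L2_def ap_def field_simps)
  thus ?thesis using D r by (cases t) auto
qed

end



locale hqv = hq + fixes v w :: real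
  assumes rf: "reduced_frac q v w" and w0: "w \<noteq> 0" and pos: "0 < v / w" and le1: "v / w \<le> 1"
begin

definition vec :: "mat2 list \<Rightarrow> real \<times> real" where "vec ws = ap (wprod ws) (v,w)"
definition rat :: "real \<times> real \<Rightarrow> real" where "rat p = fst p / snd p"

lemma vec_Nil[simp]: "vec [] = (v,w)" by (simp add: vec_def ap_def mid_def)
lemma vec_Cons[simp]: "vec (M # ws) = ap M (vec ws)" by (simp add: vec_def ap_mmul)

lemma wmap_vec: "wmap v w ws = pmclass (fst (vec ws)) (snd (vec ws))"
proof -
  obtain a b c d where "wprod ws = (a,b,c,d)" by (cases "wprod ws") auto
  thus ?thesis by (simp add: wmap_def vec_def ap_def)
qed

lemma Lam_dec: "M \<in> LamSet q \<Longrightarrow> \<exists>t k. k \<in> Kset q \<and> M = Lb t k"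
  using LamSet_eq by auto

lemma Lb_Lam: "k \<in> Kset q \<Longrightarrow> Lb t k \<in> LamSet q"
  using LamSet_eq by auto

lemma inv: "ws \<in> Words q n \<Longrightarrow> snd (vec ws) \<noteq> 0 \<and> reduced_frac q (fst (vec ws)) (snd (vec ws)) \<and>
   0 < rat (vec ws) \<and> rat (vec ws) \<le> 1 \<and> ((v/w < 1 \<or> n \<ge> 1) \<longrightarrow> rat (vec ws) < 1) \<and>
   (Fq q ^^ n) (rat (vec ws)) = v/w"
proof (induction n arbitrary: ws)
  case 0
  hence "ws = []" by (simp add: Words_0)
  thus ?case using rf w0 pos le1 by (simp add: rat_def)
next
  case (Suc n)
  then obtain M ws' where ws: "ws = M # ws'" "M \<in> LamSet q" "ws' \<in> Words q n" using Words_Suc by blast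
  obtain t k where k: "k \<in> Kset q" "M = Lb t k" using Lam_dec ws(2) by blast
  obtain p r where pr: "vec ws' = (p,r)" by fastforce
  have IH: "r \<noteq> 0" "reduced_frac q p r" "0 < p/r" "p/r \<le> 1" "(Fq q ^^ n) (p/r) = v/w"
    using Suc.IH[OF ws(3)] pr by (auto simp: rat_def)
  have e: "vec ws = ap (Lb t k) (p,r)" using ws k pr by simp
  have r: "rat (vec ws) = fb t k (p/r)" unfolding e rat_def fb_def using ap_ratio[OF IH(1)] by simp
  have o: "0 < fb t k (p/r) \<and> fb t k (p/r) < 1" using fb_open[OF k(1) IH(3) IH(4)] .
  have F0: "(Fq q ^^ Suc n) (fb t k (p/r)) = (Fq q ^^ n) (Fq q (fb t k (p/r)))"
    by (simp only: funpow_Suc_right comp_def)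
  have F: "(Fq q ^^ Suc n) (fb t k (p/r)) = v/w"
    unfolding F0 using Fq_fb[OF k(1), of "p/r" t] IH by simp
  show ?case using Lb_ap_snd[OF k(1) IH(1), where t=t] IH rf_Lb[OF k(1) IH(2), where t=t] e r o F
    by (simp add: less_imp_le)
qed

lemma rat_Cons: "ws' \<in> Words q n \<Longrightarrow> rat (vec (Lb t k # ws')) = fb t k (rat (vec ws'))"
proof -
  assume ws: "ws' \<in> Words q n"
  obtain p r where pr: "vec ws' = (p,r)" by fastforce
  have "r \<noteq> 0" using inv[OF ws] pr by simp
  thus ?thesis using pr ap_ratio[of r "Lb t k" p] by (simp add: rat_def fb_def)
qed

lemma Gi_den: "k \<in> Kset q \<Longrightarrow> y \<in> {0..1} \<Longrightarrow> x = fb t k y \<Longrightarrow>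
   (case Gi t k of (e,f,g,h) \<Rightarrow> g*x+h) > 0"
proof -
  assume k: "k \<in> Kset q" and y: "y \<in> {0..1}" and x: "x = fb t k y"
  show ?thesis
  proof (cases t)
    case True
    have "mm k \<le> x" "x \<le> rr (k-1)" using fb_range[of k y t] k y True x by auto
    thus ?thesis using branch_inv2[OF k] True by (simp add: Gi_def)
  next
    case False
    have "rr k \<le> x" "x \<le> mm k" using fb_range[of k y t] k y False x by auto
    thus ?thesis using branch_inv1[OF k] False by (simp add: Gi_def)
  qed
qed

lemma ap_mid[simp]: "ap mid p = p" by (cases p) (simp add: ap_def mid_def)

lemma surj: "reduced_frac q r s \<Longrightarrow> s \<noteq> 0 \<Longrightarrow> r/s \<in> {0..1} \<Longrightarrow> (Fq q ^^ n) (r/s) = v/w \<Longrightarrow>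
   \<exists>ws\<in>Words q n. vec ws = (r,s) \<or> vec ws = (-r,-s)"
proof (induction n arbitrary: r s)
  case 0
  obtain b d where G1: "(v,b,w,d) \<in> GammaMat q" using rf unfolding reduced_frac_def by blast
  obtain b' d' where G2: "(r,b',s,d') \<in> GammaMat q" using 0 unfolding reduced_frac_def by blast
  have "v * s = w * r" using 0 w0 by (simp add: frac_eq_eq mult.commute)
  hence "(r = v \<and> s = w) \<or> (r = -v \<and> s = -w)" using uniq_frac[OF G1 G2] by simp
  thus ?case by (intro bexI[of _ "[]"]) (auto simp: Words_0)
next
  case (Suc n)
  obtain k t y where k: "k \<in> Kset q" "y \<in> {0..1}" "r/s = fb t k y" using cover[OF Suc.prems(3)] by blast
  have F0: "(Fq q ^^ Suc n) (r/s) = (Fq q ^^ n) (Fq q (r/s))"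
    by (simp only: funpow_Suc_right comp_def)
  have Fy: "(Fq q ^^ n) y = v/w" using Suc.prems(4) Fq_fb[OF k(1) k(2)] k(3) unfolding F0 by simp
  obtain r' s' where rs: "ap (Gi t k) (r,s) = (r',s')" by fastforce
  obtain e f g h where G: "Gi t k = (e,f,g,h)" by (cases "Gi t k") auto
  have den: "g*(r/s)+h > 0" using Gi_den[OF k] G by simp
  have s': "s' = s * (g*(r/s)+h)" using rs G Suc.prems(2) by (simp add: ap_def field_simps)
  have s'0: "s' \<noteq> 0" using s' den Suc.prems(2) by simp
  have "r'/s' = mob (Gi t k) (r/s)" using ap_ratio[OF Suc.prems(2), where M="Gi t k" and p=r] rs by simp
  also have "\<dots> = mob (mmul (Gi t k) (Lb t k)) y"
    unfolding k(3) fb_def using fb_den[OF k(1), of y] k(2)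
    by (subst mob_comp) (cases t, auto simp: Lb_def L1_def L2_def)
  also have "\<dots> = y" using Gi_Lb[OF k(1)] by simp
  finally have ry: "r'/s' = y" .
  have rf': "reduced_frac q r' s'" using rf_Gi[OF k(1) Suc.prems(1), of t] rs by simp
  obtain ws' where ws': "ws' \<in> Words q n" "vec ws' = (r',s') \<or> vec ws' = (-r',-s')"
    using Suc.IH[OF rf' s'0 _ ] ry k(2) Fy by blast
  have bk: "ap (Lb t k) (r',s') = (r,s)"
    using rs Gi_Lb[OF k(1), of t] by (metis ap_mmul ap_mid)
  have "Lb t k # ws' \<in> Words q (Suc n)" using Words_Suc Lb_Lam[OF k(1)] ws'(1) by blast
  moreover have "vec (Lb t k # ws') = (r,s) \<or> vec (Lb t k # ws') = (-r,-s)"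
    using ws'(2) bk ap_neg[of "Lb t k" r' s'] by auto
  ultimately show ?case by blast
qed

lemma inj_rat: "v/w < 1 \<Longrightarrow> ws1 \<in> Words q n \<Longrightarrow> ws2 \<in> Words q n \<Longrightarrow> rat (vec ws1) = rat (vec ws2) \<Longrightarrow> ws1 = ws2"
proof (induction n arbitrary: ws1 ws2)
  case 0 thus ?case by (simp add: Words_0)
next
  case (Suc n)
  obtain M1 u1 where 1: "ws1 = M1 # u1" "M1 \<in> LamSet q" "u1 \<in> Words q n" using Suc.prems Words_Suc by blast
  obtain M2 u2 where 2: "ws2 = M2 # u2" "M2 \<in> LamSet q" "u2 \<in> Words q n" using Suc.prems Words_Suc by blast
  obtain t1 k1 where k1: "k1 \<in> Kset q" "M1 = Lb t1 k1" using Lam_dec 1 by blast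
  obtain t2 k2 where k2: "k2 \<in> Kset q" "M2 = Lb t2 k2" using Lam_dec 2 by blast
  have y1: "0 < rat (vec u1) \<and> rat (vec u1) < 1" using inv[OF 1(3)] Suc.prems(1) by auto
  have y2: "0 < rat (vec u2) \<and> rat (vec u2) < 1" using inv[OF 2(3)] Suc.prems(1) by auto
  have "fb t1 k1 (rat (vec u1)) = fb t2 k2 (rat (vec u2))"
    using Suc.prems(4) 1 2 k1 k2 rat_Cons[OF 1(3)] rat_Cons[OF 2(3)] by simp
  moreover have "rat (vec u1) \<in> {0..1}" "rat (vec u2) \<in> {0..1}" using y1 y2 by auto
  ultimately have "rat (vec u1) = rat (vec u2) \<and> k1 = k2 \<and> t1 = t2"
    using inter[OF k1(1) k2(1)] y1 y2 by (metis less_irrefl)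
  thus ?case using Suc.IH[OF Suc.prems(1) 1(3) 2(3)] 1 2 k1 k2 by simp
qed

lemma last_eq: "v/w = 1 \<Longrightarrow> n \<ge> 1 \<Longrightarrow> ws1 \<in> Words q n \<Longrightarrow> ws2 \<in> Words q n \<Longrightarrow> rat (vec ws1) = rat (vec ws2) \<Longrightarrow>
   \<exists>pre k t1 t2. k \<in> Kset q \<and> ws1 = pre @ [Lb t1 k] \<and> ws2 = pre @ [Lb t2 k]"
proof (induction n arbitrary: ws1 ws2)
  case 0 thus ?case by simp
next
  case (Suc n)
  obtain M1 u1 where 1: "ws1 = M1 # u1" "M1 \<in> LamSet q" "u1 \<in> Words q n" using Suc.prems Words_Suc by blast
  obtain M2 u2 where 2: "ws2 = M2 # u2" "M2 \<in> LamSet q" "u2 \<in> Words q n" using Suc.prems Words_Suc by blast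
  obtain t1 k1 where k1: "k1 \<in> Kset q" "M1 = Lb t1 k1" using Lam_dec 1 by blast
  obtain t2 k2 where k2: "k2 \<in> Kset q" "M2 = Lb t2 k2" using Lam_dec 2 by blast
  have eq: "fb t1 k1 (rat (vec u1)) = fb t2 k2 (rat (vec u2))"
    using Suc.prems(5) 1 2 k1 k2 rat_Cons[OF 1(3)] rat_Cons[OF 2(3)] by simp
  show ?case
  proof (cases "n = 0")
    case True
    hence u: "u1 = []" "u2 = []" using 1(3) 2(3) by (simp_all add: Words_0)
    have r0: "rat (vec []) = 1" unfolding vec_Nil rat_def fst_conv snd_conv by (rule Suc.prems(1))
    hence "rat (vec u1) = 1" "rat (vec u2) = 1" using u by simp_all
    hence "k1 = k2" using inter[OF k1(1) k2(1), of 1 1 t1 t2] eq by auto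
    thus ?thesis using 1 2 k1 k2 u by (intro exI[of _ "[]"]) auto
  next
    case False
    have y1: "0 < rat (vec u1) \<and> rat (vec u1) < 1" using inv[OF 1(3)] False by auto
    have y2: "0 < rat (vec u2) \<and> rat (vec u2) < 1" using inv[OF 2(3)] False by auto
    have "rat (vec u1) \<in> {0..1}" "rat (vec u2) \<in> {0..1}" using y1 y2 by auto
    hence "rat (vec u1) = rat (vec u2) \<and> k1 = k2 \<and> t1 = t2"
      using inter[OF k1(1) k2(1)] y1 y2 eq by (metis less_irrefl)
    then obtain pre k t1' t2' where "k \<in> Kset q" "u1 = pre @ [Lb t1' k]" "u2 = pre @ [Lb t2' k]"
      using Suc.IH[OF Suc.prems(1) _ 1(3) 2(3)] False by auto
    thus ?thesis using 1 2 k1 k2 \<open>rat (vec u1) = rat (vec u2) \<and> k1 = k2 \<and> t1 = t2\<close>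
      by (intro exI[of _ "Lb t1 k1 # pre"]) auto
  qed
qed

lemma Lb_inj: "k \<in> Kset q \<Longrightarrow> k' \<in> Kset q \<Longrightarrow> Lb t k = Lb t' k' \<Longrightarrow> k = k' \<and> t = t'"
proof -
  assume k: "k \<in> Kset q" "k' \<in> Kset q" "Lb t k = Lb t' k'"
  have "fb t k (1/2) = fb t' k' (1/2)" using k(3) by (simp add: fb_def)
  thus ?thesis using inter[OF k(1) k(2), of "1/2" "1/2" t t'] by auto
qed


lemma img_sub: "ws \<in> Words q n \<Longrightarrow> wmap v w ws \<in> RF q n v w"
proof -
  assume ws: "ws \<in> Words q n"
  note I = inv[OF ws]
  have "pmclass (fst (vec ws)) (snd (vec ws)) = pmclass (fst (vec ws)) (snd (vec ws)) \<and>
     reduced_frac q (fst (vec ws)) (snd (vec ws)) \<and> snd (vec ws) \<noteq> 0 \<and>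
     fst (vec ws) / snd (vec ws) \<in> {0..1} \<and> (Fq q ^^ n) (fst (vec ws) / snd (vec ws)) = v / w"
    using I by (simp add: rat_def less_imp_le)
  thus ?thesis unfolding RF_def wmap_vec by blast
qed

lemma case_part: "ws \<in> Words q n \<Longrightarrow> (case wprod ws of (a,b,c,d) \<Rightarrow>
               reduced_frac q (a*v + b*w) (c*v + d*w) \<and> c*v + d*w \<noteq> 0 \<and>
               (a*v + b*w) / (c*v + d*w) = mob (wprod ws) (v / w))"
proof -
  assume ws: "ws \<in> Words q n"
  obtain a b c d where W: "wprod ws = (a,b,c,d)" by (cases "wprod ws") auto
  have V: "vec ws = (a*v+b*w, c*v+d*w)" by (simp add: vec_def W ap_def)
  have R: "fst (ap (wprod ws) (v,w)) / snd (ap (wprod ws) (v,w)) = mob (wprod ws) (v/w)"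
    by (rule ap_ratio[OF w0])
  show ?thesis using inv[OF ws] R V W by (simp add: vec_def)
qed

lemma img_eq: "wmap v w ` Words q n = RF q n v w"
proof
  show "wmap v w ` Words q n \<subseteq> RF q n v w" using img_sub by blast
next
  show "RF q n v w \<subseteq> wmap v w ` Words q n"
  proof
    fix x assume "x \<in> RF q n v w"
    then obtain r s where x: "x = pmclass r s" "reduced_frac q r s" "s \<noteq> 0" "r/s \<in> {0..1}"
      "(Fq q ^^ n) (r/s) = v/w" unfolding RF_def by blast
    obtain ws where ws: "ws \<in> Words q n" "vec ws = (r,s) \<or> vec ws = (-r,-s)" using surj x(2-5) by blast
    have "wmap v w ws = x" using ws(2) x(1) by (auto simp: wmap_vec pmclass_neg)
    thus "x \<in> wmap v w ` Words q n" using ws(1) by blast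
  qed
qed

lemma wmap_rat: "ws1 \<in> Words q n \<Longrightarrow> ws2 \<in> Words q n \<Longrightarrow> wmap v w ws1 = wmap v w ws2 \<Longrightarrow> rat (vec ws1) = rat (vec ws2)"
proof -
  assume "ws1 \<in> Words q n" "ws2 \<in> Words q n" "wmap v w ws1 = wmap v w ws2"
  hence "pmclass (fst (vec ws1)) (snd (vec ws1)) = pmclass (fst (vec ws2)) (snd (vec ws2))" by (simp add: wmap_vec)
  from pmclass_ratio[OF this] show ?thesis by (simp add: rat_def)
qed

lemma bij_part: "v/w < 1 \<Longrightarrow> bij_betw (wmap v w) (Words q n) (RF q n v w)"
proof -
  assume vw: "v/w < 1"
  have "inj_on (wmap v w) (Words q n)"
  proof (rule inj_onI)
    fix x y assume "x \<in> Words q n" "y \<in> Words q n" "wmap v w x = wmap v w y"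
    thus "x = y" using inj_rat[OF vw] wmap_rat by blast
  qed
  thus ?thesis unfolding bij_betw_def using img_eq by blast
qed

lemma vec_snoc: "vec (pre @ [M]) = ap (wprod pre) (ap M (v,w))"
  by (simp add: vec_def wprod_snoc ap_mmul)

lemma card_part: "v/w = 1 \<Longrightarrow> n \<ge> 1 \<Longrightarrow> x \<in> RF q n v w \<Longrightarrow> card {ws \<in> Words q n. wmap v w ws = x} = 2"
proof -
  assume vw: "v/w = 1" and n: "n \<ge> 1" and x: "x \<in> RF q n v w"
  have vv: "v = w" using vw w0 by (simp add: divide_eq_1_iff)
  have "x \<in> wmap v w ` Words q n" using x img_eq by simp
  then obtain ws0 where ws0: "ws0 \<in> Words q n" "wmap v w ws0 = x" by (auto elim!: imageE)
  have "length ws0 = n" using ws0(1) unfolding Words_def by blast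
  hence "ws0 \<noteq> []" using n by auto
  define pre0 where "pre0 = butlast ws0"
  define M0 where "M0 = last ws0"
  have p0: "ws0 = pre0 @ [M0]" unfolding pre0_def M0_def using \<open>ws0 \<noteq> []\<close> by simp
  have "set ws0 \<subseteq> LamSet q" using ws0(1) unfolding Words_def by blast
  hence "M0 \<in> LamSet q" using p0 by simp
  then obtain t0 kk where kk: "kk \<in> Kset q" "M0 = Lb t0 kk" using Lam_dec by blast
  have same: "vec (pre0 @ [Lb t kk]) = vec ws0" for t
  proof -
    have g: "ap (Lb t' kk) (w,w) = (S kk * w + S (kk+1) * w, S (kk-1) * w + S kk * w)" for t'
      by (cases t') (simp_all add: Lb_def L1_def L2_def ap_def)
    have "ap (Lb t kk) (v,w) = ap (Lb t0 kk) (v,w)" unfolding vv g ..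
    thus ?thesis using p0 kk by (simp add: vec_snoc)
  qed
  have inW: "pre0 @ [Lb t kk] \<in> Words q n" for t
  proof -
    have "length (pre0 @ [Lb t kk]) = n" "set pre0 \<subseteq> LamSet q" using ws0(1) p0 unfolding Words_def by auto
    thus ?thesis using Lb_Lam[OF kk(1)] unfolding Words_def by simp
  qed
  have "{ws \<in> Words q n. wmap v w ws = x} = {pre0 @ [Lb False kk], pre0 @ [Lb True kk]}"
  proof (rule set_eqI, rule iffI)
    fix ws assume "ws \<in> {ws \<in> Words q n. wmap v w ws = x}"
    hence ws: "ws \<in> Words q n" "wmap v w ws = wmap v w ws0" using ws0 by auto
    have "rat (vec ws0) = rat (vec ws)" using wmap_rat[OF ws0(1) ws(1)] ws(2) by simp
    then obtain pre k t1 t2 where L: "k \<in> Kset q" "ws0 = pre @ [Lb t1 k]" "ws = pre @ [Lb t2 k]"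
      using last_eq[OF vw n ws0(1) ws(1)] by blast
    have "pre @ [Lb t1 k] = pre0 @ [Lb t0 kk]" using L(2) p0 kk(2) by simp
    hence "pre = pre0" "Lb t1 k = Lb t0 kk" by simp_all
    hence "k = kk" using Lb_inj[OF L(1) kk(1)] by blast
    hence "ws = pre0 @ [Lb t2 kk]" using L(3) \<open>pre = pre0\<close> by simp
    thus "ws \<in> {pre0 @ [Lb False kk], pre0 @ [Lb True kk]}" by (cases t2) simp_all
  next
    fix ws assume "ws \<in> {pre0 @ [Lb False kk], pre0 @ [Lb True kk]}"
    then obtain t where t: "ws = pre0 @ [Lb t kk]" by blast
    have "wmap v w ws = x" using same[of t] ws0(2) t by (simp add: wmap_vec)
    thus "ws \<in> {ws \<in> Words q n. wmap v w ws = x}" using inW t by blast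
  qed
  moreover have "pre0 @ [Lb False kk] \<noteq> pre0 @ [Lb True kk]" using Lb_inj[OF kk(1) kk(1), of False True] by auto
  ultimately show ?thesis by simp
qed

theorem main:
  "(\<forall>ws \<in> Words q n. wmap v w ws \<in> RF q n v w \<and>
            (case wprod ws of (a,b,c,d) \<Rightarrow>
               reduced_frac q (a*v + b*w) (c*v + d*w) \<and> c*v + d*w \<noteq> 0 \<and>
               (a*v + b*w) / (c*v + d*w) = mob (wprod ws) (v / w)))
       \<and> (v / w < 1 \<longrightarrow> bij_betw (wmap v w) (Words q n) (RF q n v w))
       \<and> (v / w = 1 \<longrightarrow> wmap v w ` Words q n = RF q n v w \<and>
            (n \<ge> 1 \<longrightarrow> (\<forall>x \<in> RF q n v w. card {ws \<in> Words q n. wmap v w ws = x} = 2)))"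
proof (intro conjI impI ballI)
  fix ws assume "ws \<in> Words q n"
  thus "wmap v w ws \<in> RF q n v w" by (rule img_sub)
  show "case wprod ws of (a,b,c,d) \<Rightarrow>
               reduced_frac q (a*v + b*w) (c*v + d*w) \<and> c*v + d*w \<noteq> 0 \<and>
               (a*v + b*w) / (c*v + d*w) = mob (wprod ws) (v / w)" using case_part \<open>ws \<in> Words q n\<close> .
next
  assume "v/w < 1" thus "bij_betw (wmap v w) (Words q n) (RF q n v w)" by (rule bij_part)
next
  show "wmap v w ` Words q n = RF q n v w" by (rule img_eq)
next
  fix x assume "v/w = 1" "n \<ge> 1" "x \<in> RF q n v w"
  thus "card {ws \<in> Words q n. wmap v w ws = x} = 2" by (rule card_part)
qed

end

theorem lemma4p3:
  fixes q n :: nat and v w :: real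
  assumes "odd q" and "q \<ge> 3"
    and "reduced_frac q v w" and "w \<noteq> 0" and "0 < v / w" and "v / w \<le> 1"
  shows "(\<forall>ws \<in> Words q n. wmap v w ws \<in> RF q n v w \<and>
            (case wprod ws of (a,b,c,d) \<Rightarrow>
               reduced_frac q (a*v + b*w) (c*v + d*w) \<and> c*v + d*w \<noteq> 0 \<and>
               (a*v + b*w) / (c*v + d*w) = mob (wprod ws) (v / w)))
       \<and> (v / w < 1 \<longrightarrow> bij_betw (wmap v w) (Words q n) (RF q n v w))
       \<and> (v / w = 1 \<longrightarrow> wmap v w ` Words q n = RF q n v w \<and>
            (n \<ge> 1 \<longrightarrow> (\<forall>x \<in> RF q n v w. card {ws \<in> Words q n. wmap v w ws = x} = 2)))"
proof -
  interpret hqv q v w using assms by unfold_locales auto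
  show ?thesis by (rule main)
qed


end
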